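(* Let $n\ge1$, $0<s<1$, $p>1$, $\lambda\in\mathbb{R}$, $\Sigma_\lambda=\{x\in\mathbb{R}^n: x_1<\lambda\}$, and for $x\in\mathbb{R}^n$ let $x^\lambda=(2\lambda-x_1,x_2,\dots,x_n)$. Let $u:\mathbb{R}^n\to\mathbb{R}$, set $u_\lambda(x)=u(x^\lambda)$ and $w(x)=u_\lambda(x)-u(x)$. Let $\Omega$ be a bounded domain contained in $\Sigma_\lambda$. Assume $w\in L_{sp}\cap C^{1,1}_{loc}(\Omega)$, $w$ is lower semi-continuous on $\bar\Omega$, $(-\Delta)^s_p u$ and $(-\Delta)^s_p u_\lambda$ are defined at every point of $\Omega$, and $$(-\Delta)^s_p u_\lambda(x)-(-\Delta)^s_p u(x)\ge 0 \text{ in }\Omega,\qquad w(x)\ge 0 \text{ in }\Sigma_\lambda\setminus\Omega,\qquad w(x^\lambda)=-w(x)\text{ in }\Sigma_\lambda.$$ Then $w(x)\ge 0$ in $\Omega$. Furthermore, if $w=0$ at some point of $\Omega$, then $w=0$ almost everywhere in $\mathbb{R}^n$. These conclusions also hold for an unbounded region $\Omega\subset\Sigma_\lambda$ if one additionally assumes $\liminf_{|x|\to\infty} w(x)\ge 0$.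
   Context: The fractional $p$-Laplacian is $$(-\Delta)^s_p u(x)=C_{n,sp}\,\lim_{\epsilon\to 0}\int_{\mathbb{R}^n\setminus B_\epsilon(x)}\frac{|u(x)-u(y)|^{p-2}[u(x)-u(y)]}{|x-y|^{n+sp}}\,dy,$$ with $C_{n,sp}>0$ a normalizing constant, and $$L_{sp}=\Big\{u\in L^1_{loc}(\mathbb{R}^n)\ :\ \int_{\mathbb{R}^n}\frac{|u(x)|}{1+|x|^{n+sp}}\,dx<\infty\Big\}.$$ *)

theory Defs
  imports "HOL-Analysis.Analysis"
begin

text \<open>Reflection of x in the hyperplane x_k = lambda (k plays the role of the first coordinate).\<close>
definition reflect :: "'n::finite \<Rightarrow> real \<Rightarrow> real^'n \<Rightarrow> real^'n" where
  "reflect k lam x = (\<chi> i. if i = k then 2 * lam - x $ k else x $ i)"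

definition half_space :: "'n::finite \<Rightarrow> real \<Rightarrow> (real^'n) set" where
  "half_space k lam = {x. x $ k < lam}"

definition fpl_kernel :: "real \<Rightarrow> real \<Rightarrow> (real^'n::finite \<Rightarrow> real) \<Rightarrow> real^'n \<Rightarrow> real^'n \<Rightarrow> real" where
  "fpl_kernel s p u x y =
     \<bar>u x - u y\<bar> powr (p - 2) * (u x - u y) / norm (x - y) powr (real CARD('n) + s * p)"

definition fpl_trunc :: "real \<Rightarrow> real \<Rightarrow> (real^'n::finite \<Rightarrow> real) \<Rightarrow> real^'n \<Rightarrow> real \<Rightarrow> real" where
  "fpl_trunc s p u x eps = (LINT y : - ball x eps | lborel. fpl_kernel s p u x y)"

definition fpl_defined :: "real \<Rightarrow> real \<Rightarrow> (real^'n::finite \<Rightarrow> real) \<Rightarrow> real^'n \<Rightarrow> bool" where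
  "fpl_defined s p u x \<longleftrightarrow>
     (\<forall>eps>0. set_integrable lborel (- ball x eps) (fpl_kernel s p u x)) \<and>
     (\<exists>L. (fpl_trunc s p u x \<longlongrightarrow> L) (at_right 0))"

definition frac_p_laplacian :: "real \<Rightarrow> real \<Rightarrow> real \<Rightarrow> (real^'n::finite \<Rightarrow> real) \<Rightarrow> real^'n \<Rightarrow> real" where
  "frac_p_laplacian C s p u x = C * Lim (at_right 0) (fpl_trunc s p u x)"

definition L_sp :: "real \<Rightarrow> real \<Rightarrow> (real^'n::finite \<Rightarrow> real) \<Rightarrow> bool" where
  "L_sp s p u \<longleftrightarrow>
     (\<forall>K. compact K \<longrightarrow> set_integrable lebesgue K u) \<and>
     integrable lebesgue (\<lambda>x. \<bar>u x\<bar> / (1 + norm x powr (real CARD('n) + s * p)))"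

definition C11_loc :: "(real^'n::finite) set \<Rightarrow> (real^'n \<Rightarrow> real) \<Rightarrow> bool" where
  "C11_loc \<Omega> u \<longleftrightarrow>
     (\<exists>D :: (real^'n) \<Rightarrow> ((real^'n) \<Rightarrow>\<^sub>L real).
        (\<forall>x\<in>\<Omega>. (u has_derivative blinfun_apply (D x)) (at x)) \<and>
        (\<forall>K. compact K \<and> K \<subseteq> \<Omega> \<longrightarrow>
           (\<exists>L. \<forall>x\<in>K. \<forall>y\<in>K. norm (D x - D y) \<le> L * dist x y)))"

definition lsc_on :: "('a::topological_space) set \<Rightarrow> ('a \<Rightarrow> real) \<Rightarrow> bool" where
  "lsc_on S u \<longleftrightarrow> (\<forall>x\<in>S. \<forall>a. a < u x \<longrightarrow> (\<forall>\<^sub>F y in at x within S. a < u y))"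

end

theory Submission
  imports Defs
begin



lemma reflect_nth: "reflect k lam x $ i = (if i = k then 2*lam - x$k else x$i)"
  by (simp add: reflect_def)

lemma reflect_reflect[simp]: "reflect k lam (reflect k lam x) = x"
  by (simp add: vec_eq_iff reflect_def)

lemma reflect_as_affine:
  fixes k :: "'n::finite"
  shows "reflect k lam x = (2*lam) *\<^sub>R axis k 1 + (\<Sum>j\<in>Basis. ((if j = axis k 1 then -1 else 1) * (x \<bullet> j)) *\<^sub>R j)"
proof -
  have "(\<Sum>j\<in>Basis. ((if j = axis k 1 then -1 else 1) * (x \<bullet> j)) *\<^sub>R j)
     = (\<Sum>j\<in>Basis. (x \<bullet> j) *\<^sub>R j) - (2 * (x \<bullet> axis k 1)) *\<^sub>R axis k (1::real)"
  proof -
    have "(\<Sum>j\<in>Basis. ((if j = axis k 1 then -1 else 1) * (x \<bullet> j)) *\<^sub>R j)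
        = (\<Sum>j\<in>Basis. (x \<bullet> j) *\<^sub>R j - (if j = axis k 1 then 2 * (x \<bullet> j) else 0) *\<^sub>R j)"
      by (intro sum.cong refl) (auto simp: scaleR_left_diff_distrib[symmetric])
    also have "\<dots> = (\<Sum>j\<in>Basis. (x \<bullet> j) *\<^sub>R j) - (\<Sum>j\<in>Basis. (if j = axis k 1 then 2 * (x \<bullet> j) else 0) *\<^sub>R j)"
      by (simp add: sum_subtractf)
    also have "(\<Sum>j\<in>Basis. (if j = axis k 1 then 2 * (x \<bullet> j) else 0) *\<^sub>R j) = (2 * (x \<bullet> axis k 1)) *\<^sub>R axis k (1::real)"
      apply (simp add: if_distrib[of "\<lambda>c. c *\<^sub>R _"] sum.delta' cong: if_cong)
      done
    finally show ?thesis .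
  qed
  also have "\<dots> = x - (2 * x $ k) *\<^sub>R axis k 1"
    by (simp add: euclidean_representation inner_axis)
  finally have eq: "(\<Sum>j\<in>Basis. ((if j = axis k 1 then -1 else 1) * (x \<bullet> j)) *\<^sub>R j) = x - (2 * x $ k) *\<^sub>R axis k 1" .
  show ?thesis unfolding eq
    by (simp add: vec_eq_iff reflect_def axis_def)
qed


lemma lborel_reflect_aux: "lborel = density (distr lborel borel (\<lambda>x::real^'n::finite. (2*lam) *\<^sub>R axis k 1 + (\<Sum>j\<in>Basis. ((if j = axis k 1 then -1 else 1) * (x \<bullet> j)) *\<^sub>R j)))
        (\<lambda>_. (\<Prod>j\<in>(Basis::(real^'n) set). \<bar>if j = axis k 1 then -1 else 1::real\<bar>))"
  by (rule lborel_affine_euclidean) simp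

lemma distr_reflect: "distr lborel borel (reflect k lam) = (lborel :: (real^'n::finite) measure)"
proof -
  have "lborel = density (distr lborel borel (\<lambda>x::real^'n. (2*lam) *\<^sub>R axis k 1 + (\<Sum>j\<in>Basis. ((if j = axis k 1 then -1 else 1) * (x \<bullet> j)) *\<^sub>R j)))
        (\<lambda>_. (\<Prod>j\<in>(Basis::(real^'n) set). \<bar>if j = axis k 1 then -1 else 1::real\<bar>))"
    by (rule lborel_reflect_aux)
  also have "(\<lambda>x::real^'n. (2*lam) *\<^sub>R axis k 1 + (\<Sum>j\<in>Basis. ((if j = axis k 1 then -1 else 1) * (x \<bullet> j)) *\<^sub>R j)) = reflect k lam"
    by (rule ext, rule reflect_as_affine[symmetric])
  also have "(\<lambda>_::real^'n. (\<Prod>j\<in>(Basis::(real^'n) set). \<bar>if j = axis k 1 then -1 else 1::real\<bar>)) = (\<lambda>_. 1)"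
    by (auto intro!: prod.neutral)
  finally show ?thesis by (simp add: density_1)
qed



definition Gp :: "real \<Rightarrow> real \<Rightarrow> real" where
  "Gp p t = \<bar>t\<bar> powr (p - 2) * t"

lemma Gp_sgn: "Gp p t = sgn t * \<bar>t\<bar> powr (p - 1)"
proof (cases "t = 0")
  case True then show ?thesis by (simp add: Gp_def)
next
  case False
  have "\<bar>t\<bar> powr (p - 2) * \<bar>t\<bar> = \<bar>t\<bar> powr (p - 1)"
  proof -
    have "\<bar>t\<bar> powr (p - 1) = \<bar>t\<bar> powr ((p - 2) + 1)" by simp
    also have "\<dots> = \<bar>t\<bar> powr (p - 2) * \<bar>t\<bar> powr 1" by (rule powr_add)
    finally show ?thesis by simp
  qed
  moreover have "t = sgn t * \<bar>t\<bar>" by (simp add: sgn_mult_abs)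
  ultimately show ?thesis unfolding Gp_def
    by (metis mult.left_commute)
qed

lemma Gp_strict_mono:
  assumes p: "p > 1" and ab: "a < b"
  shows "Gp p a < Gp p b"
proof -
  consider "0 \<le> a" | "b \<le> 0" | "a < 0" "0 < b" using ab by linarith
  then show ?thesis
  proof cases
    case 1
    then have "a powr (p-1) < b powr (p-1)" using ab p by (intro powr_less_mono2) auto
    then show ?thesis using 1 ab by (cases "a = 0") (auto simp: Gp_sgn)
  next
    case 2
    then have "(-b) powr (p-1) < (-a) powr (p-1)" using ab p by (intro powr_less_mono2) auto
    then show ?thesis using 2 ab by (cases "b = 0") (auto simp: Gp_sgn)
  next
    case 3
    have "0 < (-a) powr (p-1)" "0 < b powr (p-1)" using 3 by auto
    moreover have "Gp p a = - ((-a) powr (p-1))" "Gp p b = b powr (p-1)" using 3 by (simp_all add: Gp_sgn)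
    ultimately show ?thesis by linarith
  qed
qed

lemma psi_le:
  fixes G :: "real \<Rightarrow> real"
  assumes mono: "\<And>a b. a < b \<Longrightarrow> G a < G b"
    and m: "m \<le> 0" "m \<le> w" and N: "0 < N1" "N1 < N2"
  shows "(G (t+m-w) - G t) / N1 + (G (t+m) - G (t-w)) / N2 \<le> 0"
    and "(G (t+m-w) - G t) / N1 + (G (t+m) - G (t-w)) / N2 = 0 \<Longrightarrow> m = 0 \<and> w = 0"
proof -
  have monole: "\<And>a b. a \<le> b \<Longrightarrow> G a \<le> G b" using mono by (metis less_eq_real_def)
  define D1 where "D1 = G (t+m-w) - G t"
  define D2 where "D2 = G (t+m) - G (t-w)"
  have D1: "D1 \<le> 0" unfolding D1_def using monole[of "t+m-w" t] m by simp
  have S: "D1 + D2 \<le> 0" unfolding D1_def D2_def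
    using monole[of "t+m-w" "t-w"] monole[of "t+m" t] m by simp
  have Sstrict: "m < 0 \<Longrightarrow> D1 + D2 < 0" unfolding D1_def D2_def
    using mono[of "t+m-w" "t-w"] mono[of "t+m" t] by simp
  have N2: "0 < N2" using N by simp
  have key: "D1 / N1 + D2 / N2 = (D1 + D2) / N2 + D1 * (1/N1 - 1/N2)"
    using N by (simp add: field_simps)
  have inv: "1/N1 - 1/N2 > 0" using N by (simp add: field_simps)
  have t1: "(D1 + D2) / N2 \<le> 0" using S N2 by (simp add: divide_nonpos_pos)
  have t2: "D1 * (1/N1 - 1/N2) \<le> 0" using D1 inv by (simp add: mult_nonpos_nonneg)
  show "(G (t+m-w) - G t) / N1 + (G (t+m) - G (t-w)) / N2 \<le> 0"
    using key t1 t2 unfolding D1_def D2_def by linarith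
  assume eq0: "(G (t+m-w) - G t) / N1 + (G (t+m) - G (t-w)) / N2 = 0"
  then have "(D1 + D2) / N2 = 0" "D1 * (1/N1 - 1/N2) = 0"
    using key t1 t2 unfolding D1_def D2_def by linarith+
  then have "D1 + D2 = 0" "D1 = 0" using N2 inv by auto
  then have "m = 0" using Sstrict m by (metis less_le order_less_irrefl)
  moreover have "w = 0"
  proof (rule ccontr)
    assume "w \<noteq> 0"
    then have "w > 0" using m \<open>m = 0\<close> by simp
    then have "G (t+m-w) < G t" using mono \<open>m = 0\<close> by simp
    then show False using \<open>D1 = 0\<close> unfolding D1_def by simp
  qed
  ultimately show "m = 0 \<and> w = 0" by simp
qed



lemma norm_reflect_less:
  fixes x y :: "real^'n::finite"
  assumes x: "x $ k < lam" and y: "y $ k < lam"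
  shows "norm (x - y) < norm (x - reflect k lam y)"
proof -
  have sq: "norm v ^ 2 = (\<Sum>i\<in>UNIV. (v $ i)^2)" for v :: "real^'n"
    unfolding power2_norm_eq_inner inner_vec_def by (simp add: power2_eq_square)
  have split: "(\<Sum>i\<in>UNIV. f i) = f k + (\<Sum>i\<in>UNIV - {k}. f i)" for f :: "'n \<Rightarrow> real"
    by (simp add: sum.remove)
  have same: "(\<Sum>i\<in>UNIV - {k}. ((x - y) $ i)^2) = (\<Sum>i\<in>UNIV - {k}. ((x - reflect k lam y) $ i)^2)"
    by (intro sum.cong refl) (simp add: reflect_def)
  have "((x - y) $ k)^2 < ((x - reflect k lam y) $ k)^2"
  proof -
    have "((x - reflect k lam y) $ k)^2 - ((x - y) $ k)^2 = 4 * (lam - x$k) * (lam - y$k)"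
      by (simp add: reflect_def power2_eq_square algebra_simps)
    moreover have "4 * (lam - x$k) * (lam - y$k) > 0" using x y by simp
    ultimately show ?thesis by linarith
  qed
  then have "norm (x - y) ^ 2 < norm (x - reflect k lam y) ^ 2"
    unfolding sq split[of "\<lambda>i. ((x - y) $ i)^2"] split[of "\<lambda>i. ((x - reflect k lam y) $ i)^2"] same
    by simp
  then show ?thesis by (simp add: power_less_imp_less_base)
qed

lemma reflect_measurable[measurable]: "reflect k lam \<in> borel_measurable (borel :: (real^'n::finite) measure)"
proof -
  have "reflect k lam = (\<lambda>x::real^'n. (2*lam) *\<^sub>R axis k 1 + (\<Sum>j\<in>Basis. ((if j = axis k 1 then -1 else 1) * (x \<bullet> j)) *\<^sub>R j))"
    by (rule ext, rule reflect_as_affine)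
  then show ?thesis by simp
qed

lemma reflect_measurable_lborel[measurable]: "reflect k lam \<in> measurable (lborel :: (real^'n::finite) measure) borel"
  using reflect_measurable by simp

lemma integral_reflect:
  fixes f :: "real^'n::finite \<Rightarrow> real"
  assumes f: "f \<in> borel_measurable lborel"
  shows "integral\<^sup>L lborel (\<lambda>x. f (reflect k lam x)) = integral\<^sup>L lborel f"
proof -
  have "integral\<^sup>L (distr lborel borel (reflect k lam)) f = integral\<^sup>L lborel (\<lambda>x. f (reflect k lam x))"
    by (rule integral_distr) (use f in simp_all)
  then show ?thesis by (simp add: distr_reflect)
qed

lemma integrable_reflect:
  fixes f :: "real^'n::finite \<Rightarrow> real"
  assumes f: "f \<in> borel_measurable lborel"
  shows "integrable lborel (\<lambda>x. f (reflect k lam x)) \<longleftrightarrow> integrable lborel f"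
proof -
  have "integrable (distr lborel borel (reflect k lam)) f \<longleftrightarrow> integrable lborel (\<lambda>x. f (reflect k lam x))"
    by (rule integrable_distr_eq) (use f in simp_all)
  then show ?thesis by (simp add: distr_reflect)
qed

lemma AE_reflect:
  assumes "AE x in (lborel :: (real^'n::finite) measure). P x"
  shows "AE x in lborel. P (reflect k lam x)"
proof -
  from AE_E[OF assms] obtain N where N0: "{x \<in> space lborel. \<not> P x} \<subseteq> N" "emeasure lborel N = 0" "N \<in> sets lborel"
    by blast
  then have N: "{x. \<not> P x} \<subseteq> N" "N \<in> null_sets lborel" by (auto simp: null_sets_def)
  have "emeasure lborel (reflect k lam -` N) = emeasure (distr lborel borel (reflect k lam)) N"
    using N by (subst emeasure_distr) auto
  also have "\<dots> = 0" using N by (simp add: distr_reflect null_setsD1)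
  moreover have "reflect k lam -` N \<inter> space lborel \<in> sets lborel"
    by (rule measurable_sets[OF reflect_measurable_lborel]) (use N in auto)
  ultimately have "reflect k lam -` N \<in> null_sets lborel"
    by (auto simp: null_sets_def)
  then show ?thesis
    by (rule AE_I') (use N in auto)
qed


lemma lsc_min:
  fixes f :: "'a::topological_space \<Rightarrow> real"
  assumes K: "compact K" "K \<noteq> {}"
    and lsc: "\<And>x a. x \<in> K \<Longrightarrow> a < f x \<Longrightarrow> \<exists>U. open U \<and> x \<in> U \<and> (\<forall>y\<in>U \<inter> K. a < f y)"
  shows "\<exists>x\<in>K. \<forall>y\<in>K. f x \<le> f y"
proof (rule ccontr)
  assume "\<not> ?thesis"
  then have "\<forall>x\<in>K. \<exists>y\<in>K. f y < f x" by (auto simp: not_le)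
  then obtain Y where Y: "\<And>x. x \<in> K \<Longrightarrow> Y x \<in> K \<and> f (Y x) < f x" by metis
  define A where "A x = (f (Y x) + f x) / 2" for x
  have "\<exists>U. open U \<and> x \<in> U \<and> (\<forall>y\<in>U \<inter> K. A x < f y)" if "x \<in> K" for x
    using lsc[OF that, of "A x"] Y[OF that] unfolding A_def by auto
  then obtain U where U: "\<And>x. x \<in> K \<Longrightarrow> open (U x) \<and> x \<in> U x \<and> (\<forall>y\<in>U x \<inter> K. A x < f y)"
    by metis
  have cov: "K \<subseteq> \<Union>(U ` K)" using U by auto
  have opn: "\<And>T. T \<in> K \<Longrightarrow> open (U T)" using U by blast
  obtain D where D: "D \<subseteq> K" "finite D" "K \<subseteq> \<Union>(U ` D)"
    by (rule compactE_image[OF K(1) opn cov])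
  have "D \<noteq> {}" using D K(2) by auto
  then have "Min (A ` D) \<in> A ` D" using D(2) by (intro Min_in) auto
  then obtain i where i0: "i \<in> D" "A i = Min (A ` D)" by auto
  have i: "i \<in> D" "\<And>j. j \<in> D \<Longrightarrow> A i \<le> A j"
    using i0 D(2) by auto
  have "Y i \<in> K" using Y D i by auto
  then obtain j where j: "j \<in> D" "Y i \<in> U j" using D by auto
  then have "A j < f (Y i)" using U[of j] D \<open>Y i \<in> K\<close> by blast
  moreover have "f (Y i) < A i" using Y[of i] D i unfolding A_def by auto
  ultimately show False using i(2)[OF j(1)] by linarith
qed




definition Phi :: "real \<Rightarrow> real \<Rightarrow> (real^'n::finite \<Rightarrow> real) \<Rightarrow> 'n \<Rightarrow> real \<Rightarrow> real^'n \<Rightarrow> real^'n \<Rightarrow> real" where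
  "Phi s p u k lam x0 y = fpl_kernel s p (\<lambda>z. u (reflect k lam z)) x0 y - fpl_kernel s p u x0 y"

definition Psi :: "real \<Rightarrow> real \<Rightarrow> (real^'n::finite \<Rightarrow> real) \<Rightarrow> 'n \<Rightarrow> real \<Rightarrow> real^'n \<Rightarrow> real^'n \<Rightarrow> real" where
  "Psi s p u k lam x0 y = Phi s p u k lam x0 y + Phi s p u k lam x0 (reflect k lam y)"

lemma fpl_kernel_Gp: "fpl_kernel s p f x y = Gp p (f x - f y) / norm (x - y) powr (real CARD('n) + s * p)"
  for f :: "real^'n::finite \<Rightarrow> real"
  by (simp add: fpl_kernel_def Gp_def)

lemma Psi_props:
  fixes u :: "real^'n::finite \<Rightarrow> real"
  assumes s: "0 < s" and p: "1 < p" and x0: "x0 $ k < lam" and y: "y $ k < lam" "y \<noteq> x0"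
    and m0: "u (reflect k lam x0) - u x0 \<le> 0"
    and my: "u (reflect k lam x0) - u x0 \<le> u (reflect k lam y) - u y"
  shows "Psi s p u k lam x0 y \<le> 0"
    and "Psi s p u k lam x0 y = 0 \<Longrightarrow> u (reflect k lam x0) - u x0 = 0 \<and> u (reflect k lam y) - u y = 0"
proof -
  define E where "E = real CARD('n) + s * p"
  have E: "0 < E" using s p unfolding E_def by (simp add: add_pos_nonneg)
  define t where "t = u x0 - u y"
  define m where "m = u (reflect k lam x0) - u x0"
  define w where "w = u (reflect k lam y) - u y"
  define N1 where "N1 = norm (x0 - y) powr E"
  define N2 where "N2 = norm (x0 - reflect k lam y) powr E"
  have N1: "0 < N1" using y unfolding N1_def by simp
  have N12: "N1 < N2" unfolding N1_def N2_def
    by (rule powr_less_mono2[OF E]) (use norm_reflect_less[OF x0 y(1)] in auto)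
  have a1: "u (reflect k lam x0) - u (reflect k lam y) = t + m - w" by (simp add: t_def m_def w_def)
  have a2: "u (reflect k lam x0) - u y = t + m" by (simp add: t_def m_def)
  have a3: "u x0 - u (reflect k lam y) = t - w" by (simp add: t_def w_def)
  have eq: "Psi s p u k lam x0 y = (Gp p (t+m-w) - Gp p t) / N1 + (Gp p (t+m) - Gp p (t-w)) / N2"
    unfolding Psi_def Phi_def fpl_kernel_Gp reflect_reflect a1 a2 a3 N1_def N2_def E_def t_def[symmetric]
    by (simp add: diff_divide_distrib)
  have mono: "\<And>a b. a < b \<Longrightarrow> Gp p a < Gp p b" using Gp_strict_mono[OF p] by blast
  have mm: "m \<le> 0" "m \<le> w" using m0 my by (simp_all add: m_def w_def)
  show "Psi s p u k lam x0 y \<le> 0"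
    unfolding eq by (rule psi_le(1)[OF mono mm N1 N12])
  assume "Psi s p u k lam x0 y = 0"
  then have "m = 0 \<and> w = 0"
    unfolding eq using psi_le(2)[where G="Gp p" and t=t and m=m and w=w] mono mm N1 N12 by blast
  then show "u (reflect k lam x0) - u x0 = 0 \<and> u (reflect k lam y) - u y = 0"
    by (simp add: m_def w_def)
qed



lemma core:
  fixes u :: "real^'n::finite \<Rightarrow> real" and x0 :: "real^'n"
  assumes s: "0 < s" and p: "1 < p" and x0: "x0 $ k < lam"
    and def_u: "fpl_defined s p u x0"
    and def_ul: "fpl_defined s p (\<lambda>y. u (reflect k lam y)) x0"
    and ineq: "Lim (at_right 0) (fpl_trunc s p u x0) \<le> Lim (at_right 0) (fpl_trunc s p (\<lambda>y. u (reflect k lam y)) x0)"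
    and m0: "u (reflect k lam x0) - u x0 \<le> 0"
    and minim: "\<And>y. y $ k < lam \<Longrightarrow> u (reflect k lam x0) - u x0 \<le> u (reflect k lam y) - u y"
    and e: "0 < e" "e \<le> lam - x0 $ k"
  shows "AE y in lborel. y $ k < lam \<and> y \<notin> ball x0 e \<longrightarrow> Psi s p u k lam x0 y = 0"
proof -
  let ?R = "reflect k lam"
  let ?ul = "\<lambda>y. u (reflect k lam y)"
  define \<Phi> where "\<Phi> = Phi s p u k lam x0"
  define \<Psi> where "\<Psi> = Psi s p u k lam x0"
  have \<Psi>_eq: "\<Psi> y = \<Phi> y + \<Phi> (?R y)" for y by (simp add: \<Psi>_def \<Phi>_def Psi_def)
  define E0 where "E0 = lam - x0 $ k"
  have E0: "0 < E0" using x0 by (simp add: E0_def)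
  define Sg where "Sg = {y::real^'n. y $ k < lam}"
  define Sg' where "Sg' = {y::real^'n. lam < y $ k}"
  define S where "S r = Sg - ball x0 r" for r
  have ballsub: "ball x0 r \<subseteq> Sg" if "r \<le> E0" for r
  proof
    fix y assume "y \<in> ball x0 r"
    then have "norm (y - x0) < r" by (simp add: dist_norm norm_minus_commute)
    moreover have "\<bar>(y - x0) $ k\<bar> \<le> norm (y - x0)" by (rule component_le_norm_cart)
    ultimately show "y \<in> Sg" using that by (simp add: Sg_def E0_def)
  qed
  have x0Sg: "x0 \<in> Sg" using x0 by (simp add: Sg_def)
  have [measurable]: "Sg \<in> sets borel" "Sg' \<in> sets borel"
    unfolding Sg_def Sg'_def
    by (simp_all add: borel_open open_halfspace_component_lt_cart open_halfspace_component_gt_cart)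
  have [measurable]: "- ball x0 r \<in> sets borel" for r
    using borel_closed[OF closed_Compl[OF open_ball]] by simp
  have [measurable]: "S r \<in> sets borel" for r unfolding S_def by measurable
  have intg: "integrable lborel (\<lambda>y. indicator (- ball x0 r) y * \<Phi> y)" if "0 < r" for r
  proof -
    have "integrable lborel (\<lambda>y. indicator (- ball x0 r) y *\<^sub>R fpl_kernel s p ?ul x0 y - indicator (- ball x0 r) y *\<^sub>R fpl_kernel s p u x0 y)"
      using def_u def_ul that unfolding fpl_defined_def set_integrable_def by (intro Bochner_Integration.integrable_diff) auto
    then show ?thesis by (simp add: \<Phi>_def Phi_def right_diff_distrib)
  qed
  have Teq: "fpl_trunc s p ?ul x0 r - fpl_trunc s p u x0 r = integral\<^sup>L lborel (\<lambda>y. indicator (- ball x0 r) y * \<Phi> y)"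
    if "0 < r" for r
  proof -
    have i1: "integrable lborel (\<lambda>y. indicator (- ball x0 r) y *\<^sub>R fpl_kernel s p ?ul x0 y)"
     and i2: "integrable lborel (\<lambda>y. indicator (- ball x0 r) y *\<^sub>R fpl_kernel s p u x0 y)"
      using def_u def_ul that unfolding fpl_defined_def set_integrable_def by auto
    have "integral\<^sup>L lborel (\<lambda>y. indicator (- ball x0 r) y *\<^sub>R fpl_kernel s p ?ul x0 y) - integral\<^sup>L lborel (\<lambda>y. indicator (- ball x0 r) y *\<^sub>R fpl_kernel s p u x0 y)
      = integral\<^sup>L lborel (\<lambda>y. indicator (- ball x0 r) y *\<^sub>R fpl_kernel s p ?ul x0 y - indicator (- ball x0 r) y *\<^sub>R fpl_kernel s p u x0 y)"
      by (rule Bochner_Integration.integral_diff[symmetric, OF i1 i2])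
    also have "(\<lambda>y. indicator (- ball x0 r) y *\<^sub>R fpl_kernel s p ?ul x0 y - indicator (- ball x0 r) y *\<^sub>R fpl_kernel s p u x0 y) = (\<lambda>y. indicator (- ball x0 r) y * \<Phi> y)"
      by (simp add: \<Phi>_def Phi_def fun_eq_iff right_diff_distrib)
    finally show ?thesis by (simp only: fpl_trunc_def set_lebesgue_integral_def)
  qed
  define L where "L = Lim (at_right 0) (fpl_trunc s p ?ul x0) - Lim (at_right 0) (fpl_trunc s p u x0)"
  have L0: "0 \<le> L" using ineq by (simp add: L_def)
  have T: "((\<lambda>r. integral\<^sup>L lborel (\<lambda>y. indicator (- ball x0 r) y * \<Phi> y)) \<longlongrightarrow> L) (at_right 0)"
  proof -
    obtain L1 where L1: "(fpl_trunc s p ?ul x0 \<longlongrightarrow> L1) (at_right 0)" using def_ul by (auto simp: fpl_defined_def)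
    obtain L2 where L2: "(fpl_trunc s p u x0 \<longlongrightarrow> L2) (at_right 0)" using def_u by (auto simp: fpl_defined_def)
    have "Lim (at_right 0) (fpl_trunc s p ?ul x0) = L1" "Lim (at_right 0) (fpl_trunc s p u x0) = L2"
      using L1 L2 by (auto intro!: tendsto_Lim)
    then have lim: "((\<lambda>r. fpl_trunc s p ?ul x0 r - fpl_trunc s p u x0 r) \<longlongrightarrow> L) (at_right 0)"
      using tendsto_diff[OF L1 L2] by (simp add: L_def)
    have ev: "\<forall>\<^sub>F r in at_right 0. fpl_trunc s p ?ul x0 r - fpl_trunc s p u x0 r = integral\<^sup>L lborel (\<lambda>y. indicator (- ball x0 r) y * \<Phi> y)"
      using eventually_at_right_less[of "0::real"] by eventually_elim (use Teq in auto)
    show ?thesis by (rule iffD1[OF tendsto_cong[OF ev] lim])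
  qed

  define f' where "f' y = indicator Sg' y * \<Phi> y" for y
  have Sg'_ball: "Sg' \<subseteq> - ball x0 r" if "r \<le> E0" for r
    using ballsub[OF that] by (auto simp: Sg_def Sg'_def)
  have f'_int: "integrable lborel f'"
  proof -
    have "integrable lborel (\<lambda>y. indicator (- ball x0 E0) y * \<Phi> y * indicator Sg' y)"
      by (rule integrable_real_mult_indicator) (use intg[OF E0] in auto)
    moreover have "indicator (- ball x0 E0) y * \<Phi> y * indicator Sg' y = f' y" for y
      using Sg'_ball[of E0] by (auto simp: f'_def split: split_indicator)
    ultimately show ?thesis by simp
  qed
  define h where "h y = indicator Sg y * \<Phi> (?R y)" for y
  have h_f': "h = (\<lambda>y. f' (?R y))"
    by (auto simp: fun_eq_iff h_def f'_def Sg_def Sg'_def reflect_def split: split_indicator)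
  have f'_meas: "f' \<in> borel_measurable lborel" using f'_int by (rule borel_measurable_integrable)
  have h_int: "integrable lborel h" unfolding h_f' using integrable_reflect[OF f'_meas] f'_int by simp
  have h_integral: "integral\<^sup>L lborel h = integral\<^sup>L lborel f'" unfolding h_f' by (rule integral_reflect[OF f'_meas])
  have h_meas: "h \<in> borel_measurable lborel" using h_int by (rule borel_measurable_integrable)
  have AEH: "AE y in lborel. y $ k \<noteq> lam"
  proof -
    have "negligible {y::real^'n. axis k 1 \<bullet> y = lam}"
      by (rule negligible_hyperplane) simp
    then have "{y::real^'n. axis k 1 \<bullet> y = lam} \<in> null_sets lebesgue"
      by (simp add: negligible_iff_null_sets)
    moreover have "{y::real^'n. axis k 1 \<bullet> y = lam} \<in> sets lborel"
      by (simp add: borel_closed closed_hyperplane)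
    ultimately have "{y::real^'n. axis k 1 \<bullet> y = lam} \<in> null_sets lborel"
      using null_sets_completion_iff by blast
    then show ?thesis by (rule AE_not_in[THEN eventually_mono]) (simp add: inner_axis')
  qed
  define I where "I r = integral\<^sup>L lborel (\<lambda>y. indicator (S r) y * \<Phi> y)" for r
  have Sball: "S r \<subseteq> - ball x0 r" for r by (auto simp: S_def)
  have I_int: "integrable lborel (\<lambda>y. indicator (S r) y * \<Phi> y)" if "0 < r" for r
  proof -
    have "integrable lborel (\<lambda>y. indicator (- ball x0 r) y * \<Phi> y * indicator (S r) y)"
      by (rule integrable_real_mult_indicator) (use intg[OF that] in auto)
    moreover have "indicator (- ball x0 r) y * \<Phi> y * indicator (S r) y = indicator (S r) y * \<Phi> y" for y
      using Sball[of r] by (auto split: split_indicator)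
    ultimately show ?thesis by simp
  qed
  have decomp: "integral\<^sup>L lborel (\<lambda>y. indicator (- ball x0 r) y * \<Phi> y) = I r + integral\<^sup>L lborel f'"
    if "0 < r" "r \<le> E0" for r
  proof -
    have "integral\<^sup>L lborel (\<lambda>y. indicator (- ball x0 r) y * \<Phi> y) = integral\<^sup>L lborel (\<lambda>y. indicator (S r) y * \<Phi> y + f' y)"
    proof (rule integral_cong_AE)
      show "(\<lambda>y. indicator (- ball x0 r) y * \<Phi> y) \<in> borel_measurable lborel"
        using intg[OF that(1)] by (rule borel_measurable_integrable)
      show "(\<lambda>y. indicator (S r) y * \<Phi> y + f' y) \<in> borel_measurable lborel"
        using I_int[OF that(1)] f'_int by (intro borel_measurable_add borel_measurable_integrable)
      show "AE y in lborel. indicator (- ball x0 r) y * \<Phi> y = indicator (S r) y * \<Phi> y + f' y"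
        using AEH
      proof eventually_elim
        case (elim y)
        have bs: "ball x0 r \<subseteq> Sg" by (rule ballsub[OF that(2)])
        show ?case
        proof (cases "y $ k < lam")
          case True
          then show ?thesis by (auto simp: S_def Sg_def Sg'_def f'_def split: split_indicator)
        next
          case False
          then have "lam < y $ k" using elim by simp
          then have "y \<notin> ball x0 r" "y \<notin> Sg" using bs by (auto simp: Sg_def)
          then show ?thesis using \<open>lam < y $ k\<close> by (auto simp: S_def Sg'_def f'_def split: split_indicator)
        qed
      qed
    qed
    also have "\<dots> = I r + integral\<^sup>L lborel f'"
      unfolding I_def by (rule Bochner_Integration.integral_add[OF I_int[OF that(1)] f'_int])
    finally show ?thesis .
  qed
  define J where "J r = integral\<^sup>L lborel (\<lambda>y. h y * indicator (- ball x0 r) y)" for r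
  have J_int: "integrable lborel (\<lambda>y. h y * indicator (- ball x0 r) y)" for r
    by (rule integrable_real_mult_indicator) (use h_int in auto)
  define P where "P r = integral\<^sup>L lborel (\<lambda>y. indicator (S r) y * \<Psi> y)" for r
  have P_fun: "(\<lambda>y. indicator (S r) y * \<Psi> y) = (\<lambda>y. indicator (S r) y * \<Phi> y + h y * indicator (- ball x0 r) y)" for r
    by (auto simp: fun_eq_iff \<Psi>_eq h_def S_def split: split_indicator)
  have P_int: "integrable lborel (\<lambda>y. indicator (S r) y * \<Psi> y)" if "0 < r" for r
    unfolding P_fun by (intro Bochner_Integration.integrable_add I_int that J_int)
  have P_eq: "P r = I r + J r" if "0 < r" for r
    unfolding P_def P_fun I_def J_def by (rule Bochner_Integration.integral_add[OF I_int[OF that] J_int])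
  have Jlim: "((\<lambda>t. J (inverse t)) \<longlongrightarrow> integral\<^sup>L lborel h) at_top"
    unfolding J_def
  proof (rule integral_dominated_convergence_at_top[where w="\<lambda>y. \<bar>h y\<bar>"])
    show "h \<in> borel_measurable lborel" by (rule h_meas)
    show "(\<lambda>y. h y * indicator (- ball x0 (inverse t)) y) \<in> borel_measurable lborel" for t
      using J_int by (rule borel_measurable_integrable)
    show "integrable lborel (\<lambda>y. \<bar>h y\<bar>)" using h_int by (rule integrable_abs)
    show "AE y in lborel. ((\<lambda>t. h y * indicator (- ball x0 (inverse t)) y) \<longlongrightarrow> h y) at_top"
      using AE_lborel_singleton[of x0]
    proof eventually_elim
      case (elim y)
      then have d: "0 < dist x0 y" by simp
      have "\<forall>\<^sub>F t in at_top. h y * indicator (- ball x0 (inverse t)) y = h y"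
        using eventually_gt_at_top[of "inverse (dist x0 y)"]
      proof eventually_elim
        case (elim t)
        have "inverse t < inverse (inverse (dist x0 y))"
          by (rule less_imp_inverse_less[OF elim]) (use d in simp)
        then have "inverse t < dist x0 y" by simp
        then show ?case by (simp add: indicator_def)
      qed
      then show ?case by (rule tendsto_eventually)
    qed
    show "\<forall>\<^sub>F t in at_top. AE y in lborel. norm (h y * indicator (- ball x0 (inverse t)) y) \<le> \<bar>h y\<bar>"
      by (intro always_eventually allI AE_I2) (auto simp: indicator_def)
  qed
  have Tinv: "((\<lambda>t. integral\<^sup>L lborel (\<lambda>y. indicator (- ball x0 (inverse t)) y * \<Phi> y)) \<longlongrightarrow> L) at_top"
    using filterlim_compose[OF T filterlim_inverse_at_right_top] .
  have Plim: "((\<lambda>t. P (inverse t)) \<longlongrightarrow> L) at_top"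
  proof -
    have "((\<lambda>t. integral\<^sup>L lborel (\<lambda>y. indicator (- ball x0 (inverse t)) y * \<Phi> y) - integral\<^sup>L lborel f' + J (inverse t)) \<longlongrightarrow> L - integral\<^sup>L lborel f' + integral\<^sup>L lborel h) at_top"
      by (intro tendsto_intros Tinv Jlim)
    then have lim: "((\<lambda>t. integral\<^sup>L lborel (\<lambda>y. indicator (- ball x0 (inverse t)) y * \<Phi> y) - integral\<^sup>L lborel f' + J (inverse t)) \<longlongrightarrow> L) at_top"
      by (simp add: h_integral)
    have ev: "\<forall>\<^sub>F t in at_top. integral\<^sup>L lborel (\<lambda>y. indicator (- ball x0 (inverse t)) y * \<Phi> y) - integral\<^sup>L lborel f' + J (inverse t) = P (inverse t)"
      using eventually_gt_at_top[of "inverse E0"]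
    proof eventually_elim
      case (elim t)
      have ie: "0 < inverse E0" using E0 by simp
      then have t0: "0 < t" using elim by linarith
      have "inverse t < inverse (inverse E0)"
        by (rule less_imp_inverse_less[OF elim ie])
      then have "inverse t < E0" by simp
      then show ?case using decomp[of "inverse t"] P_eq[of "inverse t"] t0 by simp
    qed
    show ?thesis by (rule iffD1[OF tendsto_cong[OF ev] lim])
  qed
  have Psi_nonpos: "\<Psi> y \<le> 0" if "y \<in> Sg" "y \<noteq> x0" for y
    using Psi_props(1)[OF s p x0 _ that(2) m0 minim] that by (simp add: \<Psi>_def Sg_def)
  have Pmono: "P a \<le> P b" if "0 < a" "a \<le> b" for a b
    unfolding P_def
  proof (rule integral_mono[OF P_int[OF that(1)] P_int])
    show "0 < b" using that by simp
    fix y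
    show "indicator (S a) y * \<Psi> y \<le> indicator (S b) y * \<Psi> y"
    proof (cases "y \<in> S b")
      case True
      then have "y \<in> S a" using that by (auto simp: S_def)
      then show ?thesis using True by simp
    next
      case False
      show ?thesis
      proof (cases "y \<in> S a")
        case True
        then have "y \<in> Sg" "y \<noteq> x0" using that by (auto simp: S_def)
        then show ?thesis using True False Psi_nonpos[of y] by simp
      qed (use False in simp)
    qed
  qed
  have LP: "L \<le> P e"
  proof (rule tendsto_upperbound[OF Plim])
    show "\<forall>\<^sub>F t in at_top. P (inverse t) \<le> P e"
      using eventually_gt_at_top[of "inverse e"]
    proof eventually_elim
      case (elim t)
      have ie: "0 < inverse e" using e by simp
      then have t0: "0 < t" using elim by linarith
      have "inverse t < inverse (inverse e)"
        by (rule less_imp_inverse_less[OF elim ie])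
      then have "inverse t < e" by simp
      then show ?case using t0 by (intro Pmono) auto
    qed
  qed simp
  have nonneg: "0 \<le> - (indicator (S e) y * \<Psi> y)" for y
  proof (cases "y \<in> S e")
    case True
    then have "y \<in> Sg" "y \<noteq> x0" using e by (auto simp: S_def)
    then show ?thesis using True Psi_nonpos[of y] by simp
  qed simp
  have "0 \<le> integral\<^sup>L lborel (\<lambda>y. - (indicator (S e) y * \<Psi> y))"
    by (rule integral_nonneg_AE, rule AE_I2, rule nonneg)
  then have "P e \<le> 0" by (simp add: P_def)
  then have "P e = 0" using LP L0 by simp
  then have "integral\<^sup>L lborel (\<lambda>y. - (indicator (S e) y * \<Psi> y)) = 0" by (simp add: P_def)
  moreover have "integrable lborel (\<lambda>y. - (indicator (S e) y * \<Psi> y))"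
    using P_int[OF e(1)] by (rule integrable_minus)
  moreover have "AE y in lborel. 0 \<le> - (indicator (S e) y * \<Psi> y)"
    by (rule AE_I2, rule nonneg)
  ultimately have "AE y in lborel. - (indicator (S e) y * \<Psi> y) = 0"
    using integral_nonneg_eq_0_iff_AE by blast
  then show ?thesis
  proof (rule eventually_mono)
    fix y assume "- (indicator (S e) y * \<Psi> y) = 0"
    then show "y $ k < lam \<and> y \<notin> ball x0 e \<longrightarrow> Psi s p u k lam x0 y = 0"
      by (auto simp: S_def Sg_def \<Psi>_def)
  qed
qed


theorem theorem2p2:
  fixes u :: "real^'n::finite \<Rightarrow> real"
    and k :: 'n
    and s p lam C :: real
    and \<Omega> :: "(real^'n) set"
  assumes C_pos: "C > 0"
    and s: "0 < s" "s < 1"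
    and p: "p > 1"
    and dom: "open \<Omega>" "connected \<Omega>" "\<Omega> \<noteq> {}"
    and sub: "\<Omega> \<subseteq> half_space k lam"
    and bdd_or_liminf: "bounded \<Omega> \<or> Liminf at_infinity (\<lambda>x. ereal (u (reflect k lam x) - u x)) \<ge> 0"
    and Lsp: "L_sp s p (\<lambda>x. u (reflect k lam x) - u x)"
    and C11: "C11_loc \<Omega> (\<lambda>x. u (reflect k lam x) - u x)"
    and lsc: "lsc_on (closure \<Omega>) (\<lambda>x. u (reflect k lam x) - u x)"
    and def_u: "\<forall>x\<in>\<Omega>. fpl_defined s p u x"
    and def_ul: "\<forall>x\<in>\<Omega>. fpl_defined s p (\<lambda>y. u (reflect k lam y)) x"
    and ineq: "\<forall>x\<in>\<Omega>. frac_p_laplacian C s p (\<lambda>y. u (reflect k lam y)) x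
                        - frac_p_laplacian C s p u x \<ge> 0"
    and outside: "\<forall>x\<in>half_space k lam - \<Omega>. u (reflect k lam x) - u x \<ge> 0"
    and antisym: "\<forall>x\<in>half_space k lam.
        u (reflect k lam (reflect k lam x)) - u (reflect k lam x) = - (u (reflect k lam x) - u x)"
  shows "(\<forall>x\<in>\<Omega>. u (reflect k lam x) - u x \<ge> 0) \<and>
         ((\<exists>x\<in>\<Omega>. u (reflect k lam x) - u x = 0) \<longrightarrow>
            (AE x in lebesgue. u (reflect k lam x) - u x = 0))"
proof -
  let ?R = "reflect k lam"
  let ?ul = "\<lambda>y. u (reflect k lam y)"
  define w where "w x = u (?R x) - u x" for x
  have hyp0: "w x = 0" if "x $ k = lam" for x
  proof -
    have "?R x = x" using that by (simp add: vec_eq_iff reflect_def)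
    then show ?thesis by (simp add: w_def)
  qed
  have OS: "x $ k < lam" if "x \<in> \<Omega>" for x using sub that by (auto simp: half_space_def)
  have out: "0 \<le> w x" if "x $ k < lam" "x \<notin> \<Omega>" for x
    using outside that by (auto simp: half_space_def w_def)
  have ineq': "Lim (at_right 0) (fpl_trunc s p u x) \<le> Lim (at_right 0) (fpl_trunc s p ?ul x)" if "x \<in> \<Omega>" for x
  proof -
    have "0 \<le> C * (Lim (at_right 0) (fpl_trunc s p ?ul x) - Lim (at_right 0) (fpl_trunc s p u x))"
      using ineq that by (simp add: frac_p_laplacian_def right_diff_distrib)
    then show ?thesis using C_pos by (simp add: zero_le_mult_iff)
  qed
  have part1: "\<forall>x\<in>\<Omega>. 0 \<le> w x"
  proof (rule ccontr)
    assume "\<not> (\<forall>x\<in>\<Omega>. 0 \<le> w x)"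
    then obtain x1 where x1: "x1 \<in> \<Omega>" "w x1 < 0" by (auto simp: not_le)
    define \<delta> where "\<delta> = - w x1"
    have \<delta>: "0 < \<delta>" using x1 by (simp add: \<delta>_def)
    obtain R0 where R0: "norm x1 \<le> R0" "\<And>y. y \<in> \<Omega> \<Longrightarrow> R0 < norm y \<Longrightarrow> - \<delta> < w y"
    proof (cases "bounded \<Omega>")
      case True
      then obtain a where a: "\<forall>y\<in>\<Omega>. norm y \<le> a" by (auto simp: bounded_iff)
      show ?thesis by (rule that[of "max a (norm x1)"]) (use a in force)+
    next
      case False
      then have "0 \<le> Liminf at_infinity (\<lambda>x. ereal (w x))" using bdd_or_liminf by (simp add: w_def)
      then have all: "\<forall>y<0. \<forall>\<^sub>F x in at_infinity. y < ereal (w x)" by (simp add: le_Liminf_iff)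
      have "ereal (- \<delta>) < 0" using \<delta> by simp
      then have "\<forall>\<^sub>F x in at_infinity. ereal (- \<delta>) < ereal (w x)" using all by blast
      then have "\<forall>\<^sub>F x in at_infinity. - \<delta> < w x" by simp
      then obtain b where b: "\<And>x. b \<le> norm x \<Longrightarrow> - \<delta> < w x" by (auto simp: eventually_at_infinity)
      show ?thesis by (rule that[of "max b (norm x1)"]) (use b in force)+
    qed
    define K where "K = closure \<Omega> \<inter> cball 0 R0"
    have Kc: "compact K" unfolding K_def by (intro closed_Int_compact) auto
    have x1K: "x1 \<in> K" using x1 R0 closure_subset by (auto simp: K_def)
    have "\<exists>x\<in>K. \<forall>y\<in>K. w x \<le> w y"
    proof (rule lsc_min[OF Kc])
      show "K \<noteq> {}" using x1K by auto
      fix x a assume xK: "x \<in> K" and a: "a < w x"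
      have "x \<in> closure \<Omega>" using xK by (simp add: K_def)
      then have "\<forall>\<^sub>F y in at x within closure \<Omega>. a < w y"
        using lsc a unfolding lsc_on_def w_def by blast
      then obtain U where U: "open U" "x \<in> U" "\<And>y. y \<in> U \<Longrightarrow> y \<in> closure \<Omega> \<Longrightarrow> y \<noteq> x \<Longrightarrow> a < w y"
        unfolding eventually_at_topological by blast
      show "\<exists>U. open U \<and> x \<in> U \<and> (\<forall>y\<in>U \<inter> K. a < w y)"
        using U a by (intro exI[of _ U]) (auto simp: K_def)
    qed
    then obtain x0 where x0K: "x0 \<in> K" and x0min: "\<And>y. y \<in> K \<Longrightarrow> w x0 \<le> w y" by blast
    have wx0: "w x0 < 0" using x0min[OF x1K] x1 by simp
    have clo: "closure \<Omega> \<subseteq> {y. y $ k \<le> lam}"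
      by (rule closure_minimal) (use OS in \<open>auto simp: closed_halfspace_component_le_cart less_imp_le\<close>)
    have x0O: "x0 \<in> \<Omega>"
    proof (rule ccontr)
      assume nx: "x0 \<notin> \<Omega>"
      have "x0 $ k \<le> lam" using x0K clo by (auto simp: K_def)
      then consider "x0 $ k < lam" | "x0 $ k = lam" by linarith
      then show False
      proof cases
        case 1 then show False using out[OF 1 nx] wx0 by simp
      next
        case 2 then show False using hyp0[OF 2] wx0 by simp
      qed
    qed
    have minim: "w x0 \<le> w y" if "y $ k < lam" for y
    proof (cases "y \<in> \<Omega>")
      case True
      show ?thesis
      proof (cases "norm y \<le> R0")
        case True
        then have "y \<in> K" using \<open>y \<in> \<Omega>\<close> closure_subset by (auto simp: K_def)
        then show ?thesis by (rule x0min)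
      next
        case False
        then have "- \<delta> < w y" using R0(2)[OF \<open>y \<in> \<Omega>\<close>] by simp
        moreover have "w x0 \<le> w x1" by (rule x0min[OF x1K])
        ultimately show ?thesis by (simp add: \<delta>_def)
      qed
    next
      case False
      then show ?thesis using out[OF that False] wx0 by simp
    qed
    define e where "e = lam - x0 $ k"
    have e: "0 < e" using OS[OF x0O] by (simp add: e_def)
    have AE1: "AE y in lborel. y $ k < lam \<and> y \<notin> ball x0 e \<longrightarrow> Psi s p u k lam x0 y = 0"
      by (rule core[OF s(1) p OS[OF x0O] _ _ ineq'[OF x0O]])
         (use def_u def_ul x0O wx0 minim e in \<open>auto simp: w_def e_def\<close>)
    have AE2: "AE y in lborel. \<not> (y $ k < lam \<and> y \<notin> ball x0 e)"
      using AE1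
    proof eventually_elim
      case (elim y)
      show ?case
      proof
        assume y: "y $ k < lam \<and> y \<notin> ball x0 e"
        then have yx: "y \<noteq> x0" using e by auto
        have "u (reflect k lam x0) - u x0 \<le> 0" using wx0 by (simp add: w_def)
        moreover have "u (reflect k lam x0) - u x0 \<le> u (reflect k lam y) - u y"
          using minim[of y] y by (simp add: w_def)
        moreover have "Psi s p u k lam x0 y = 0" using elim y by blast
        ultimately have "w x0 = 0"
          using Psi_props(2)[OF s(1) p OS[OF x0O] _ yx] y by (simp add: w_def)
        then show False using wx0 by simp
      qed
    qed
    define c where "c = x0 - (2*e) *\<^sub>R axis k (1::real)"
    have cb: "y $ k < lam \<and> y \<notin> ball x0 e" if "y \<in> ball c e" for y
    proof
      have d: "norm (y - c) < e" using that by (simp add: dist_norm norm_minus_commute)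
      have "\<bar>(y - c) $ k\<bar> \<le> norm (y - c)" by (rule component_le_norm_cart)
      then show "y $ k < lam" using d e by (simp add: c_def e_def axis_def)
      have n2: "norm (x0 - c) = 2*e" using e by (simp add: c_def)
      have "x0 - c = (x0 - y) + (y - c)" by simp
      then have "norm (x0 - c) \<le> norm (x0 - y) + norm (y - c)" by (metis norm_triangle_ineq)
      then have "e \<le> dist x0 y" using n2 d by (simp add: dist_norm)
      then show "y \<notin> ball x0 e" by simp
    qed
    have "AE y in lborel. y \<notin> ball c e" using AE2 by eventually_elim (use cb in blast)
    then have "emeasure lborel (ball c e) = 0"
      by (subst (asm) AE_iff_measurable[of "ball c e"]) auto
    then have "measure lborel (ball c e) = 0" by (simp add: measure_def)
    then show False using content_ball_pos[OF e, of c] by simp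
  qed
  have part2: "(\<exists>x\<in>\<Omega>. w x = 0) \<longrightarrow> (AE x in lebesgue. w x = 0)"
  proof
    assume "\<exists>x\<in>\<Omega>. w x = 0"
    then obtain x0 where x0O: "x0 \<in> \<Omega>" "w x0 = 0" by blast
    have wnn: "0 \<le> w y" if "y $ k < lam" for y using part1 out that by (cases "y \<in> \<Omega>") auto
    define e0 where "e0 = lam - x0 $ k"
    have e0: "0 < e0" using OS[OF x0O(1)] by (simp add: e0_def)
    have AEj: "AE y in lborel. y $ k < lam \<and> y \<notin> ball x0 (e0 / real (Suc j)) \<longrightarrow> Psi s p u k lam x0 y = 0" for j :: nat
    proof (rule core[OF s(1) p OS[OF x0O(1)] _ _ ineq'[OF x0O(1)]])
      show "fpl_defined s p u x0" using def_u x0O by blast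
      show "fpl_defined s p (\<lambda>y. u (reflect k lam y)) x0" using def_ul x0O by blast
      show "u (reflect k lam x0) - u x0 \<le> 0" using x0O by (simp add: w_def)
      show "u (reflect k lam x0) - u x0 \<le> u (reflect k lam y) - u y" if "y $ k < lam" for y
        using x0O wnn[OF that] by (simp add: w_def)
      show "0 < e0 / real (Suc j)" using e0 by simp
      have "e0 / real (Suc j) \<le> e0 / 1" using e0 by (intro divide_left_mono) auto
      then show "e0 / real (Suc j) \<le> lam - x0 $ k" by (simp add: e0_def)
    qed
    then have "AE y in lborel. \<forall>j::nat. y $ k < lam \<and> y \<notin> ball x0 (e0 / real (Suc j)) \<longrightarrow> Psi s p u k lam x0 y = 0"
      unfolding AE_all_countable using AEj by blast
    then have AES: "AE y in lborel. y $ k < lam \<longrightarrow> w y = 0"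
    proof eventually_elim
      case (elim y)
      show ?case
      proof
        assume yk: "y $ k < lam"
        show "w y = 0"
        proof (cases "y = x0")
          case True then show ?thesis using x0O by simp
        next
          case False
          then have d: "0 < dist x0 y / e0" using e0 by simp
          obtain j :: nat where j: "inverse (real (Suc j)) < dist x0 y / e0"
            using reals_Archimedean[OF d] by blast
          have m1: "e0 * inverse (real (Suc j)) < e0 * (dist x0 y / e0)"
            by (rule mult_strict_left_mono[OF j e0])
          have m2: "e0 * (dist x0 y / e0) = dist x0 y" using e0 by simp
          have m3: "e0 / real (Suc j) = e0 * inverse (real (Suc j))" by (simp add: divide_inverse)
          have "e0 / real (Suc j) < dist x0 y" unfolding m3 using m1 m2 by linarith
          then have "y \<notin> ball x0 (e0 / real (Suc j))" by simp
          then have "Psi s p u k lam x0 y = 0" using elim yk by blast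
          moreover have "u (reflect k lam x0) - u x0 \<le> 0" using x0O by (simp add: w_def)
          moreover have "u (reflect k lam x0) - u x0 \<le> u (reflect k lam y) - u y"
            using x0O wnn[OF yk] by (simp add: w_def)
          ultimately show ?thesis
            using Psi_props(2)[OF s(1) p OS[OF x0O(1)] yk False] by (simp add: w_def)
        qed
      qed
    qed
    have AE': "AE y in lborel. (?R y) $ k < lam \<longrightarrow> w (?R y) = 0"
      by (rule AE_reflect[OF AES])
    have "AE y in lborel. w y = 0"
      using AES AE'
    proof eventually_elim
      case (elim y)
      consider "y $ k < lam" | "y $ k = lam" | "lam < y $ k" by linarith
      then show ?case
      proof cases
        case 1 then show ?thesis using elim by blast
      next
        case 2 then show ?thesis by (rule hyp0)
      next
        case 3
        then have "(?R y) $ k < lam" by (simp add: reflect_def)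
        then have "w (?R y) = 0" using elim by blast
        then show ?thesis by (simp add: w_def)
      qed
    qed
    then show "AE x in lebesgue. w x = 0" by (rule AE_completion)
  qed
  show ?thesis using part1 part2 unfolding w_def by simp
qed


end
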